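(* Let $K$ be a compact Hausdorff space with at least two points and let $\mathcal{A}$ be a non-empty subalgebra of $C(K,\mathbb{C})$. Suppose there exists $K_0\subset K$ such that $K\setminus K_0$ has at least two elements and: (0) for every $f\in C(K,\mathbb{C})$, either there exists a sequence $(f_n)_{n\ge0}\subset\mathcal{A}$ with $f_n(x)\to f(x)$ as $n\to+\infty$ for every $x\in K_0$, or there exists $g\in\mathcal{A}$ with $g(x)=f(x)$ for all $x\in K_0$; (1) $\mathcal{A}$ separates the points of $K\setminus K_0$ (for distinct $x,y\in K\setminus K_0$ there is $g\in\mathcal{A}$ with $g(x)\neq g(y)$) and separates any point of $K_0$ from any (distinct) point of $K$; (2) at least one of the following holds: (2a) for every $x\in K\setminus K_0$ there exists $g\in\mathcal{A}$ with $g(x)\neq0$, or (2b) $\mathcal{A}$ contains all constant functions; (3) for every $g\in\mathcal{A}$ its complex conjugate $\bar g=\mathrm{Re}(g)-i\,\mathrm{Im}(g)$ belongs to $\mathcal{A}$. Then $\mathcal{A}$ is dense in $C(K,\mathbb{C})$ for the uniform norm.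
   Context: $C(K,\mathbb{C})$ is the algebra of continuous complex-valued functions on $K$ with the uniform norm $\|g\|=\sup_{x\in K}|g(x)|$; density refers to this norm. *)

theory Defs
  imports "HOL-Analysis.Analysis"
begin

text \<open>Elements of C(K,C) are represented by functions 'a => complex that are continuous
on K; only their values on K matter.\<close>

definition cont_subalgebra :: "'a::topological_space set \<Rightarrow> ('a \<Rightarrow> complex) set \<Rightarrow> bool" where
  "cont_subalgebra K A \<longleftrightarrow>
     (\<forall>f\<in>A. continuous_on K f) \<and>
     (\<forall>f\<in>A. \<forall>g\<in>A. \<exists>h\<in>A. \<forall>x\<in>K. h x = f x + g x) \<and>
     (\<forall>f\<in>A. \<forall>g\<in>A. \<exists>h\<in>A. \<forall>x\<in>K. h x = f x * g x) \<and>
     (\<forall>f\<in>A. \<forall>c::complex. \<exists>h\<in>A. \<forall>x\<in>K. h x = c * f x)"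

definition uniformly_dense_in_C :: "'a::topological_space set \<Rightarrow> ('a \<Rightarrow> complex) set \<Rightarrow> bool" where
  "uniformly_dense_in_C K A \<longleftrightarrow>
     (\<forall>f. continuous_on K f \<longrightarrow>
        (\<forall>e>0. \<exists>g\<in>A. (SUP x\<in>K. norm (f x - g x)) \<le> e))"

end

theory Submission
  imports Defs
begin

theorem corollary2:
  fixes K :: "'a::t2_space set" and A :: "('a \<Rightarrow> complex) set" and K0 :: "'a set"
  assumes "compact K"
    and "\<exists>x\<in>K. \<exists>y\<in>K. x \<noteq> y"
    and "cont_subalgebra K A" and "A \<noteq> {}"
    and "K0 \<subseteq> K"
    and "\<exists>x\<in>K - K0. \<exists>y\<in>K - K0. x \<noteq> y"
    and "\<forall>f. continuous_on K f \<longrightarrow>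
           (\<exists>fs::nat \<Rightarrow> 'a \<Rightarrow> complex. (\<forall>n. fs n \<in> A) \<and> (\<forall>x\<in>K0. (\<lambda>n. fs n x) \<longlonglongrightarrow> f x))
           \<or> (\<exists>g\<in>A. \<forall>x\<in>K0. g x = f x)"
    and "\<forall>x\<in>K - K0. \<forall>y\<in>K - K0. x \<noteq> y \<longrightarrow> (\<exists>g\<in>A. g x \<noteq> g y)"
    and "\<forall>x\<in>K0. \<forall>y\<in>K. x \<noteq> y \<longrightarrow> (\<exists>g\<in>A. g x \<noteq> g y)"
    and "(\<forall>x\<in>K - K0. \<exists>g\<in>A. g x \<noteq> 0) \<or> (\<forall>c::complex. \<exists>g\<in>A. \<forall>x\<in>K. g x = c)"
    and "\<forall>g\<in>A. \<exists>h\<in>A. \<forall>x\<in>K. h x = cnj (g x)"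
  shows "uniformly_dense_in_C K A"
proof -
  have contA: "\<And>f. f \<in> A \<Longrightarrow> continuous_on K f" using assms(3) unfolding cont_subalgebra_def by blast
  have addA: "\<And>f g. f \<in> A \<Longrightarrow> g \<in> A \<Longrightarrow> \<exists>h\<in>A. \<forall>x\<in>K. h x = f x + g x"
    using assms(3) unfolding cont_subalgebra_def by blast
  have mulA: "\<And>f g. f \<in> A \<Longrightarrow> g \<in> A \<Longrightarrow> \<exists>h\<in>A. \<forall>x\<in>K. h x = f x * g x"
    using assms(3) unfolding cont_subalgebra_def by blast
  have smulA: "\<And>f c. f \<in> A \<Longrightarrow> \<exists>h\<in>A. \<forall>x\<in>K. h x = c * f x"
    using assms(3) unfolding cont_subalgebra_def by blast
  have cnjA: "\<And>g. g \<in> A \<Longrightarrow> \<exists>h\<in>A. \<forall>x\<in>K. h x = cnj (g x)" using assms(11) by blast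
  obtain g0 where g0: "g0 \<in> A" using assms(4) by blast
  obtain z0 where z0: "z0 \<in> A" "\<forall>x\<in>K. z0 x = 0" using smulA[OF g0, of 0] by auto
  have reA: "\<exists>r\<in>A. \<forall>x\<in>K. r x = complex_of_real (Re (g x))" if g: "g \<in> A" for g
  proof -
    obtain h where h: "h \<in> A" "\<forall>x\<in>K. h x = cnj (g x)" using cnjA[OF g] by blast
    obtain s where s: "s \<in> A" "\<forall>x\<in>K. s x = g x + h x" using addA[OF g h(1)] by blast
    obtain r where r: "r \<in> A" "\<forall>x\<in>K. r x = (1/2) * s x" using smulA[OF s(1)] by blast
    show ?thesis using r s h by (intro bexI[of _ r]) (auto simp: complex_add_cnj)
  qed
  have Knz: "K \<noteq> {}" using assms(2) by blast
  have nonvan: "\<exists>g\<in>A. g x \<noteq> 0" if x: "x \<in> K" for x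
  proof (rule ccontr)
    assume nv: "\<not> (\<exists>g\<in>A. g x \<noteq> 0)"
    show False
    proof (cases "x \<in> K0")
      case True
      have "continuous_on K (\<lambda>_. 1::complex)" by simp
      then have "(\<exists>fs::nat \<Rightarrow> 'a \<Rightarrow> complex. (\<forall>n. fs n \<in> A) \<and> (\<forall>x\<in>K0. (\<lambda>n. fs n x) \<longlonglongrightarrow> 1))
           \<or> (\<exists>g\<in>A. \<forall>x\<in>K0. g x = 1)" using assms(7) by blast
      then show False
      proof
        assume "\<exists>fs::nat \<Rightarrow> 'a \<Rightarrow> complex. (\<forall>n. fs n \<in> A) \<and> (\<forall>x\<in>K0. (\<lambda>n. fs n x) \<longlonglongrightarrow> 1)"
        then obtain fs where fs: "\<forall>n. fs n \<in> A" "(\<lambda>n. fs n x) \<longlonglongrightarrow> (1::complex)" using True by blast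
        have "(\<lambda>n. fs n x) = (\<lambda>n. 0)" using fs(1) nv by auto
        then have "(\<lambda>n. (0::complex)) \<longlonglongrightarrow> 1" using fs(2) by simp
        then have "(0::complex) = 1" using LIMSEQ_unique tendsto_const by blast
        then show False by simp
      next
        assume "\<exists>g\<in>A. \<forall>x\<in>K0. g x = 1"
        then show False using True nv by force
      qed
    next
      case False
      then show False using assms(10) nv x by force
    qed
  qed
  have loc: "\<exists>g U. g \<in> A \<and> open U \<and> x \<in> U \<and> (\<forall>y\<in>U \<inter> K. g y \<noteq> 0)" if x: "x \<in> K" for x
  proof -
    obtain g where g: "g \<in> A" "g x \<noteq> 0" using nonvan[OF x] by blast
    obtain U where U: "open U" "U \<inter> K = g -` (-{0}) \<inter> K"
      using contA[OF g(1)] unfolding continuous_on_open_invariant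
      by (meson open_Compl closed_singleton)
    show ?thesis using g U x by (intro exI[of _ g] exI[of _ U]) auto
  qed
  then obtain G U where GU: "\<And>x. x \<in> K \<Longrightarrow> G x \<in> A \<and> open (U x) \<and> x \<in> U x \<and> (\<forall>y\<in>U x \<inter> K. G x y \<noteq> 0)"
    by metis
  obtain C where C: "C \<subseteq> K" "finite C" "K \<subseteq> (\<Union>c\<in>C. U c)"
    using compactE_image[OF assms(1), of K U] GU by blast
  have ind: "F \<subseteq> K \<Longrightarrow> \<exists>h\<in>A. \<forall>y\<in>K. h y = complex_of_real (Re (h y)) \<and> Re (h y) \<ge> 0
              \<and> (y \<in> (\<Union>c\<in>F. U c) \<longrightarrow> Re (h y) > 0)" if "finite F" for F
    using that
  proof (induction F rule: finite_induct)
    case empty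
    then show ?case using z0 by (intro bexI[of _ z0]) auto
  next
    case (insert x F)
    then obtain h where h: "h \<in> A" "\<forall>y\<in>K. h y = complex_of_real (Re (h y)) \<and> Re (h y) \<ge> 0
              \<and> (y \<in> (\<Union>c\<in>F. U c) \<longrightarrow> Re (h y) > 0)" by auto
    have xK: "x \<in> K" using insert by auto
    note Gx = GU[OF xK]
    obtain cg where cg: "cg \<in> A" "\<forall>y\<in>K. cg y = cnj (G x y)" using cnjA Gx by blast
    obtain q where q: "q \<in> A" "\<forall>y\<in>K. q y = G x y * cg y" using mulA Gx cg(1) by blast
    obtain s where s: "s \<in> A" "\<forall>y\<in>K. s y = h y + q y" using addA h(1) q(1) by blast
    have qy: "q y = complex_of_real ((Re (G x y))\<^sup>2 + (Im (G x y))\<^sup>2)" if "y \<in> K" for y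
      using q cg that by (simp add: complex_mult_cnj)
    have "\<forall>y\<in>K. s y = complex_of_real (Re (s y)) \<and> Re (s y) \<ge> 0
              \<and> (y \<in> (\<Union>c\<in>insert x F. U c) \<longrightarrow> Re (s y) > 0)"
    proof
      fix y assume y: "y \<in> K"
      have sy: "s y = complex_of_real (Re (h y) + ((Re (G x y))\<^sup>2 + (Im (G x y))\<^sup>2))"
        using s(2) y qy[OF y] h(2) y by (metis of_real_add)
      have pos: "y \<in> U x \<Longrightarrow> (Re (G x y))\<^sup>2 + (Im (G x y))\<^sup>2 > 0"
        using Gx y by (metis IntI complex_eq_iff sum_power2_gt_zero_iff zero_complex.sel(1) zero_complex.sel(2))
      show "s y = complex_of_real (Re (s y)) \<and> Re (s y) \<ge> 0
              \<and> (y \<in> (\<Union>c\<in>insert x F. U c) \<longrightarrow> Re (s y) > 0)"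
        using sy h(2) y pos
        by (auto simp: add_nonneg_pos add_pos_nonneg)
    qed
    then show ?case using s(1) by blast
  qed
  obtain h where h: "h \<in> A" "\<And>y. y \<in> K \<Longrightarrow> h y = complex_of_real (Re (h y)) \<and> Re (h y) > 0"
    using ind[OF C(2) C(1)] C(3) by blast
  define P where "P u \<longleftrightarrow> continuous_on K u \<and> (\<exists>g\<in>A. \<exists>c. \<forall>x\<in>K. u x = Re (g x) + c)" for u :: "'a \<Rightarrow> real"
  have SW: "\<exists>g. P g \<and> (\<forall>x\<in>K. \<bar>u x - g x\<bar> < e)" if "continuous_on K u" "0 < e" for u e
  proof (rule Stone_Weierstrass_HOL[OF assms(1), of P])
    show "P (\<lambda>x. c)" for c unfolding P_def using z0 by (intro conjI continuous_on_const bexI[of _ z0]) auto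
    show "P f \<Longrightarrow> continuous_on K f" for f unfolding P_def by blast
    show "P (\<lambda>x. f x + g x)" if fg: "P f \<and> P g" for f g
    proof -
      obtain g1 c1 g2 c2 where a: "g1 \<in> A" "\<forall>x\<in>K. f x = Re (g1 x) + c1" "g2 \<in> A" "\<forall>x\<in>K. g x = Re (g2 x) + c2"
        "continuous_on K f" "continuous_on K g"
        using fg unfolding P_def by blast
      obtain s where s: "s \<in> A" "\<forall>x\<in>K. s x = g1 x + g2 x" using addA a by blast
      show ?thesis unfolding P_def using a s
        by (intro conjI continuous_on_add bexI[of _ s] exI[of _ "c1+c2"]) auto
    qed
    show "P (\<lambda>x. f x * g x)" if fg: "P f \<and> P g" for f g
    proof -
      obtain g1 c1 g2 c2 where a: "g1 \<in> A" "\<forall>x\<in>K. f x = Re (g1 x) + c1" "g2 \<in> A" "\<forall>x\<in>K. g x = Re (g2 x) + c2"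
        "continuous_on K f" "continuous_on K g"
        using fg unfolding P_def by blast
      obtain r1 where r1: "r1 \<in> A" "\<forall>x\<in>K. r1 x = complex_of_real (Re (g1 x))" using reA a by blast
      obtain r2 where r2: "r2 \<in> A" "\<forall>x\<in>K. r2 x = complex_of_real (Re (g2 x))" using reA a by blast
      obtain p where p: "p \<in> A" "\<forall>x\<in>K. p x = r1 x * r2 x" using mulA r1 r2 by blast
      obtain s1 where s1: "s1 \<in> A" "\<forall>x\<in>K. s1 x = complex_of_real c2 * r1 x" using smulA r1 by blast
      obtain s2 where s2: "s2 \<in> A" "\<forall>x\<in>K. s2 x = complex_of_real c1 * r2 x" using smulA r2 by blast
      obtain t1 where t1: "t1 \<in> A" "\<forall>x\<in>K. t1 x = p x + s1 x" using addA p s1 by blast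
      obtain t where t: "t \<in> A" "\<forall>x\<in>K. t x = t1 x + s2 x" using addA t1 s2 by blast
      have "\<forall>x\<in>K. f x * g x = Re (t x) + c1 * c2"
        using a r1 r2 p s1 s2 t1 t by (auto simp: algebra_simps)
      then show ?thesis unfolding P_def using a t
        by (intro conjI continuous_on_mult bexI[of _ t] exI[of _ "c1*c2"]) auto
    qed
    show "\<exists>f. P f \<and> f x \<noteq> f y" if xy: "x \<in> K \<and> y \<in> K \<and> x \<noteq> y" for x y
    proof -
      obtain g where g: "g \<in> A" "g x \<noteq> g y"
      proof (cases "x \<in> K0")
        case True then show ?thesis using assms(9) xy that by meson
      next
        case F1: False
        show ?thesis
        proof (cases "y \<in> K0")
          case True then show ?thesis using assms(9) xy that by metis
        next
          case False then show ?thesis using assms(8) F1 xy that by (meson DiffI)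
        qed
      qed
      show ?thesis
      proof (cases "Re (g x) = Re (g y)")
        case False
        then show ?thesis unfolding P_def using g contA[OF g(1)]
          by (intro exI[of _ "\<lambda>x. Re (g x)"] conjI continuous_on_Re bexI[of _ g] exI[of _ 0]) auto
      next
        case True
        then have im: "Im (g x) \<noteq> Im (g y)" using g(2) complex_eq_iff by blast
        obtain g' where g': "g' \<in> A" "\<forall>x\<in>K. g' x = (- \<i>) * g x" using smulA g(1) by blast
        have "continuous_on K (\<lambda>x. Im (g x))" using contA[OF g(1)] by (intro continuous_on_Im)
        then show ?thesis unfolding P_def using g' im
          by (intro exI[of _ "\<lambda>x. Im (g x)"] conjI bexI[of _ g'] exI[of _ 0]) auto
      qed
    qed
  qed (use that in auto)
  have realapp: "\<exists>g\<in>A. \<forall>x\<in>K. \<bar>u x - Re (g x)\<bar> < e" if u: "continuous_on K u" and e: "0 < e" for u e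
  proof -
    have ch: "continuous_on K (\<lambda>x. Re (h x))" using contA[OF h(1)] by (intro continuous_on_Re)
    have "compact ((\<lambda>x. Re (h x)) ` K)" using compact_continuous_image[OF ch assms(1)] .
    then obtain M where M: "M > 0" "\<forall>x\<in>K. \<bar>Re (h x)\<bar> \<le> M"
      using compact_imp_bounded bounded_pos by (metis image_eqI real_norm_def)
    have cq: "continuous_on K (\<lambda>x. u x / Re (h x))"
      using u ch h(2) by (intro continuous_on_divide) (auto, fastforce)
    obtain v where v: "P v" "\<forall>x\<in>K. \<bar>u x / Re (h x) - v x\<bar> < e / M"
      using SW[OF cq divide_pos_pos[OF e M(1)]] by blast
    obtain g c where gc: "g \<in> A" "\<forall>x\<in>K. v x = Re (g x) + c" using v(1) unfolding P_def by blast
    obtain p where p: "p \<in> A" "\<forall>x\<in>K. p x = h x * g x" using mulA h(1) gc(1) by blast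
    obtain q where q: "q \<in> A" "\<forall>x\<in>K. q x = complex_of_real c * h x" using smulA h(1) by blast
    obtain s where s: "s \<in> A" "\<forall>x\<in>K. s x = p x + q x" using addA p q by blast
    have "\<bar>u x - Re (s x)\<bar> < e" if x: "x \<in> K" for x
    proof -
      have hx: "h x = complex_of_real (Re (h x))" "Re (h x) > 0" using h(2)[OF x] by auto
      have "Re (s x) = Re (h x) * v x"
      proof -
        have e1: "s x = h x * g x + complex_of_real c * h x" using s p q x by auto
        define a where "a = Re (h x)"
        have "h x = complex_of_real a" using hx(1) a_def by simp
        then have "Re (s x) = a * Re (g x) + c * a" using e1 by simp
        then show ?thesis using gc x a_def by (simp add: algebra_simps)
      qed
      then have "u x - Re (s x) = Re (h x) * (u x / Re (h x) - v x)"
        using hx(2) by (simp add: field_simps)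
      then have "\<bar>u x - Re (s x)\<bar> = \<bar>Re (h x)\<bar> * \<bar>u x / Re (h x) - v x\<bar>" by (simp add: abs_mult)
      also have "\<dots> \<le> M * \<bar>u x / Re (h x) - v x\<bar>" using M x by (intro mult_right_mono) auto
      also have "\<dots> < M * (e / M)" using v(2) x M by (intro mult_strict_left_mono) auto
      also have "\<dots> = e" using M by simp
      finally show ?thesis .
    qed
    then show ?thesis using s(1) by blast
  qed
  show ?thesis unfolding uniformly_dense_in_C_def
  proof (intro allI impI)
    fix f :: "'a \<Rightarrow> complex" and e :: real
    assume f: "continuous_on K f"
    assume e: "0 < e"
    {
      obtain g1 where g1: "g1 \<in> A" "\<forall>x\<in>K. \<bar>Re (f x) - Re (g1 x)\<bar> < e/2"
        using realapp[of "\<lambda>x. Re (f x)" "e/2"] f e by (auto intro: continuous_on_Re)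
      obtain g2 where g2: "g2 \<in> A" "\<forall>x\<in>K. \<bar>Im (f x) - Re (g2 x)\<bar> < e/2"
        using realapp[of "\<lambda>x. Im (f x)" "e/2"] f e by (auto intro: continuous_on_Im)
      obtain r1 where r1: "r1 \<in> A" "\<forall>x\<in>K. r1 x = complex_of_real (Re (g1 x))" using reA g1 by blast
      obtain r2 where r2: "r2 \<in> A" "\<forall>x\<in>K. r2 x = complex_of_real (Re (g2 x))" using reA g2 by blast
      obtain r3 where r3: "r3 \<in> A" "\<forall>x\<in>K. r3 x = \<i> * r2 x" using smulA r2 by blast
      obtain k where k: "k \<in> A" "\<forall>x\<in>K. k x = r1 x + r3 x" using addA r1 r3 by blast
      have bd: "cmod (f x - k x) \<le> e" if x: "x \<in> K" for x
      proof -
        have "f x - k x = complex_of_real (Re (f x) - Re (g1 x)) + \<i> * complex_of_real (Im (f x) - Re (g2 x))"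
          using k r1 r3 r2 x by (simp add: complex_eq_iff)
        then have "cmod (f x - k x) \<le> cmod (complex_of_real (Re (f x) - Re (g1 x)))
                     + cmod (\<i> * complex_of_real (Im (f x) - Re (g2 x)))"
          by (metis norm_triangle_ineq)
        also have "\<dots> = \<bar>Re (f x) - Re (g1 x)\<bar> + \<bar>Im (f x) - Re (g2 x)\<bar>"
          by (simp add: norm_mult del: of_real_diff)
        also have "\<dots> \<le> e" using g1(2) g2(2) x by fastforce
        finally show ?thesis .
      qed
      have "(SUP x\<in>K. cmod (f x - k x)) \<le> e"
        using Knz bd by (intro cSUP_least) auto
      then show "\<exists>g\<in>A. (SUP x\<in>K. cmod (f x - g x)) \<le> e" using k(1) by blast
    }
  qed
qed

end
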